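(* For all integers $n,m,k\ge 0$, the number of Dyck paths of semilength $n$ with $m$ contacts and $k$ up-steps at odd height equals the number of Dyck paths of semilength $n$ with $m$ contacts and $k$ peaks.
   Context: Paths have steps $(1,1)$ (up-steps) and $(1,-1)$ (down-steps) and start at $(0,0)$. A Dyck path ends on the line $y=0$ and has no vertex with negative $y$-coordinate. The semilength is half the number of steps. An up-step is at height $j$ if it goes from $(i-1,j-1)$ to $(i,j)$; a down-step is at height $j$ if it goes from $(i,j)$ to $(i+1,j-1)$; it is at odd height if $j$ is odd. A peak is an up-step immediately followed by a down-step. A contact is a down-step at height $1$ or an up-step at height $0$. *)

theory Defs
  imports Main
begin

(* A lattice path is a list of steps: True = up-step (1,1), False = down-step (1,-1). *)
type_synonym path = "bool list"

definition ht :: "path \<Rightarrow> nat \<Rightarrow> int" where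
  "ht p i = (\<Sum>j<i. if p ! j then 1 else -1)"

definition dyck :: "path \<Rightarrow> bool" where
  "dyck p \<longleftrightarrow> ht p (length p) = 0 \<and> (\<forall>i\<le>length p. ht p i \<ge> 0)"

definition semilength :: "path \<Rightarrow> nat" where
  "semilength p = length p div 2"

(* height of step i (0-based): an up-step from (i,h) to (i+1,h+1) has height h+1;
   a down-step from (i,h) to (i+1,h-1) has height h *)
definition step_height :: "path \<Rightarrow> nat \<Rightarrow> int" where
  "step_height p i = (if p ! i then ht p i + 1 else ht p i)"

definition odd_up_steps :: "path \<Rightarrow> nat" where
  "odd_up_steps p = card {i. i < length p \<and> p ! i \<and> odd (step_height p i)}"

definition peaks :: "path \<Rightarrow> nat" where
  "peaks p = card {i. Suc i < length p \<and> p ! i \<and> \<not> p ! Suc i}"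

definition contacts :: "path \<Rightarrow> nat" where
  "contacts p = card {i. i < length p \<and>
     ((\<not> p ! i \<and> step_height p i = 1) \<or> (p ! i \<and> step_height p i = 0))}"

definition dyck_paths :: "nat \<Rightarrow> path set" where
  "dyck_paths n = {p. dyck p \<and> semilength p = n}"

end

theory Submission imports Defs begin

datatype tr = Lf | Nd tr tr

fun enc :: "tr \<Rightarrow> path" where
  "enc Lf = []"
| "enc (Nd l r) = True # enc l @ False # enc r"

fun ok :: "int \<Rightarrow> path \<Rightarrow> bool" where
  "ok h [] = (h = 0)"
| "ok h (True # xs) = ok (h+1) xs"
| "ok h (False # xs) = (h \<ge> 1 \<and> ok (h-1) xs)"

lemma ht_0[simp]: "ht p 0 = 0" by (simp add: ht_def)
lemma ht_Suc[simp]: "ht (x#xs) (Suc i) = (if x then 1 else -1) + ht xs i"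
  unfolding ht_def sum.lessThan_Suc_shift by simp

lemma sh_0[simp]: "step_height (x#xs) 0 = (if x then 1 else 0)"
  by (simp add: step_height_def)
lemma sh_Suc[simp]: "step_height (x#xs) (Suc i) = (if x then 1 else -1) + step_height xs i"
  by (simp add: step_height_def)

lemma all_le_Suc: "(\<forall>i\<le>Suc n. P i) \<longleftrightarrow> P 0 \<and> (\<forall>i\<le>n. P (Suc i))"
  by (metis Suc_le_mono le0 not0_implies_Suc)

lemma ok_ht: "0 \<le> h \<Longrightarrow> ok h p \<longleftrightarrow> h + ht p (length p) = 0 \<and> (\<forall>i\<le>length p. 0 \<le> h + ht p i)"
proof (induction p arbitrary: h)
  case Nil then show ?case by auto
next
  case (Cons x xs)
  show ?case
  proof (cases x)
    case True
    then show ?thesis using Cons.IH[of "h+1"] Cons.prems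
      by (simp only: all_le_Suc length_Cons ok.simps ht_Suc ht_0) (auto simp: algebra_simps)
  next
    case False
    show ?thesis
    proof (cases "h \<ge> 1")
      case True
      then show ?thesis using Cons.IH[of "h-1"] Cons.prems \<open>\<not>x\<close>
        by (simp only: all_le_Suc length_Cons ok.simps ht_Suc ht_0) (auto simp: algebra_simps)
    next
      case f2: False
      have "\<not> (0 \<le> h + ht (x#xs) (Suc 0))" using f2 False by simp
      then show ?thesis using False f2 by (auto simp del: ht_Suc)
    qed
  qed
qed

lemma dyck_ok: "dyck p \<longleftrightarrow> ok 0 p"
  using ok_ht[of 0 p] by (simp add: dyck_def)

lemma ok_enc: "0 \<le> h \<Longrightarrow> ok h (enc t @ ys) = ok h ys"
  by (induction t arbitrary: h ys) auto

fun encs :: "tr list \<Rightarrow> path" where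
  "encs [] = []"
| "encs [t] = enc t"
| "encs (t # u # ts) = enc t @ False # encs (u # ts)"

lemma ok_encs: "ok (int h) p \<Longrightarrow> \<exists>ts. length ts = Suc h \<and> p = encs ts"
proof (induction p arbitrary: h)
  case Nil
  then show ?case by (intro exI[of _ "[Lf]"]) auto
next
  case (Cons x xs)
  show ?case
  proof (cases x)
    case True
    then have "ok (int (Suc h)) xs" using Cons.prems by (simp add: add.commute)
    from Cons.IH[OF this] obtain ts where ts: "length ts = Suc (Suc h)" "xs = encs ts" by blast
    then obtain a b rest where abr: "ts = a # b # rest"
      by (metis length_Suc_conv)
    show ?thesis
    proof (cases rest)
      case Nil
      then show ?thesis using ts abr True by (intro exI[of _ "[Nd a b]"]) auto
    next
      case (Cons c rs)
      then show ?thesis using ts abr True by (intro exI[of _ "Nd a b # rest"]) auto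
    qed
  next
    case False
    then obtain h' where h': "h = Suc h'" "ok (int h') xs" using Cons.prems
      by (cases h) auto
    from Cons.IH[OF h'(2)] obtain ts where ts: "length ts = Suc h'" "xs = encs ts" by blast
    then obtain a rest where "ts = a # rest" by (metis length_Suc_conv)
    then show ?thesis using ts h' False by (intro exI[of _ "Lf # ts"]) auto
  qed
qed

lemma ok0_enc: "ok 0 p \<Longrightarrow> \<exists>t. p = enc t"
  using ok_encs[of 0 p] by (auto simp: length_Suc_conv)

lemma enc_inj_aux: "enc s @ False # xs = enc t @ False # ys \<Longrightarrow> s = t \<and> xs = ys"
proof (induction s arbitrary: t xs ys)
  case Lf
  then show ?case
  proof (cases t)
    case Lf
    then show ?thesis using Lf.prems by simp
  next
    case (Nd c d)
    then show ?thesis using Lf.prems by simp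
  qed
next
  case (Nd a b)
  show ?case
  proof (cases t)
    case Lf
    then show ?thesis using Nd.prems by simp
  next
    case (Nd c d)
    with Nd.prems have e: "enc a @ False # (enc b @ False # xs) = enc c @ False # (enc d @ False # ys)" by simp
    from Nd.IH(1)[OF e] have ac: "a = c" and e2: "enc b @ False # xs = enc d @ False # ys" by auto
    from Nd.IH(2)[OF e2] have "b = d" "xs = ys" by auto
    with ac Nd show ?thesis by simp
  qed
qed

lemma inj_enc: "inj enc"
  by (rule injI) (use enc_inj_aux[of _ "[]" _ "[]"] in auto)

lemma len_enc[simp]: "length (enc t) = 2 * size t"
  by (induction t) auto

lemma dyck_enc: "dyck p \<longleftrightarrow> p \<in> range enc"
  using ok0_enc ok_enc[of 0 _ "[]"] by (auto simp: dyck_ok)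

fun cnt :: "(int \<Rightarrow> bool \<Rightarrow> bool) \<Rightarrow> int \<Rightarrow> path \<Rightarrow> nat" where
  "cnt Q h [] = 0"
| "cnt Q h (x # xs) = (if Q (if x then h+1 else h) x then 1 else 0) + cnt Q (if x then h+1 else h-1) xs"

lemma card_Suc_split: "card {i. i < Suc n \<and> P i} = (if P 0 then 1 else 0) + card {i. i < n \<and> P (Suc i)}"
proof -
  have e: "{i. i < Suc n \<and> P i} = {i::nat. i = 0 \<and> P 0} \<union> Suc ` {i. i < n \<and> P (Suc i)}"
    by (auto simp: image_iff less_Suc_eq_0_disj)
  have "card ({i::nat. i = 0 \<and> P 0} \<union> Suc ` {i. i < n \<and> P (Suc i)}) = card {i::nat. i = 0 \<and> P 0} + card (Suc ` {i. i < n \<and> P (Suc i)})"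
  proof -
    have d: "{i. i = 0 \<and> P 0} \<inter> Suc ` {i. i < n \<and> P (Suc i)} = {}" by auto
    have f1: "finite {i::nat. i = 0 \<and> P 0}" by (rule finite_subset[of _ "{0}"]) auto
    have f2: "finite (Suc ` {i. i < n \<and> P (Suc i)})" by simp
    show ?thesis using card_Un_disjoint[OF f1 f2 d] .
  qed
  also have "card (Suc ` {i. i < n \<and> P (Suc i)}) = card {i. i < n \<and> P (Suc i)}"
    by (rule card_image) simp
  also have "card {i::nat. i = 0 \<and> P 0} = (if P 0 then 1 else 0)" by auto
  finally show ?thesis using e by simp
qed

lemma card_cnt: "card {i. i < length p \<and> Q (h + step_height p i) (p ! i)} = cnt Q h p"
proof (induction p arbitrary: h)
  case Nil then show ?case by simp
next
  case (Cons x xs)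
  have "card {i. i < length (x#xs) \<and> Q (h + step_height (x#xs) i) ((x#xs) ! i)}
     = (if Q (h + step_height (x#xs) 0) x then 1 else 0) + card {i. i < length xs \<and> Q ((if x then h+1 else h-1) + step_height xs i) (xs ! i)}"
    by (simp only: length_Cons card_Suc_split nth_Cons_0 nth_Cons_Suc sh_Suc) (simp add: algebra_simps)
  then show ?case using Cons.IH by simp
qed

fun endh :: "int \<Rightarrow> path \<Rightarrow> int" where
  "endh h [] = h"
| "endh h (x # xs) = endh (if x then h+1 else h-1) xs"

lemma cnt_append: "cnt Q h (xs @ ys) = cnt Q h xs + cnt Q (endh h xs) ys"
  by (induction xs arbitrary: h) auto

lemma endh_append: "endh h (xs @ ys) = endh (endh h xs) ys"
  by (induction xs arbitrary: h) auto

lemma endh_enc[simp]: "endh h (enc t) = h"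
  by (induction t arbitrary: h) (auto simp: endh_append)

fun cntT :: "(int \<Rightarrow> bool \<Rightarrow> bool) \<Rightarrow> int \<Rightarrow> tr \<Rightarrow> nat" where
  "cntT Q h Lf = 0"
| "cntT Q h (Nd l r) = (if Q (h+1) True then 1 else 0) + cntT Q (h+1) l + (if Q (h+1) False then 1 else 0) + cntT Q h r"

lemma cnt_enc: "cnt Q h (enc t) = cntT Q h t"
  by (induction t arbitrary: h) (auto simp: cnt_append)

fun pk :: "path \<Rightarrow> nat" where
  "pk [] = 0"
| "pk [x] = 0"
| "pk (x # y # xs) = (if x \<and> \<not> y then 1 else 0) + pk (y # xs)"

lemma card_pk: "card {i. Suc i < length p \<and> p ! i \<and> \<not> p ! Suc i} = pk p"
proof (induction p rule: pk.induct)
  case (3 x y xs)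
  have "card {i. Suc i < length (x # y # xs) \<and> (x # y # xs) ! i \<and> \<not> (x # y # xs) ! Suc i}
    = card {i. i < Suc (length xs) \<and> (x # y # xs) ! i \<and> \<not> (x # y # xs) ! Suc i}" by simp
  also have "\<dots> = (if x \<and> \<not> y then 1 else 0) + card {i. i < length xs \<and> (y # xs) ! i \<and> \<not> (y # xs) ! Suc i}"
    by (simp only: card_Suc_split nth_Cons_0 nth_Cons_Suc)
  also have "card {i. i < length xs \<and> (y # xs) ! i \<and> \<not> (y # xs) ! Suc i} = pk (y # xs)"
    using 3 by simp
  finally show ?case by simp
qed auto

lemma pk_Cons: "pk (x # zs) = (if zs \<noteq> [] \<and> x \<and> \<not> hd zs then 1 else 0) + pk zs"
  by (cases zs) auto

lemma pk_append: "pk (xs @ ys) = pk xs + pk ys + (if xs \<noteq> [] \<and> ys \<noteq> [] \<and> last xs \<and> \<not> hd ys then 1 else 0)"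
proof (induction xs)
  case Nil then show ?case by simp
next
  case (Cons x xs)
  then show ?case by (cases xs) (auto simp: pk_Cons)
qed

lemma enc_nil: "enc t = [] \<longleftrightarrow> t = Lf"
  by (cases t) auto

lemma enc_last: "t \<noteq> Lf \<Longrightarrow> \<not> last (enc t)"
  by (induction t) (auto simp: enc_nil)

lemma enc_hd_last: "t \<noteq> Lf \<Longrightarrow> enc t \<noteq> [] \<and> hd (enc t) \<and> \<not> last (enc t)"
  using enc_last[of t] by (cases t) auto

fun LL :: "tr \<Rightarrow> nat" where
  "LL Lf = 0"
| "LL (Nd l r) = (if l = Lf then 1 else 0) + LL l + LL r"

lemma pk_enc: "pk (enc t) = LL t"
proof (induction t)
  case Lf then show ?case by simp
next
  case (Nd l r)
  have "pk (enc (Nd l r)) = pk (True # (enc l @ False # enc r))" by simp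
  also have "\<dots> = (if l = Lf then 1 else 0) + pk (enc l @ False # enc r)"
    by (subst pk_Cons) (cases l, auto)
  also have "pk (enc l @ False # enc r) = pk (enc l) + pk (enc r)"
    using enc_hd_last[of l] enc_nil[of l] by (subst pk_append) (auto simp: pk_Cons)
  finally show ?case using Nd by simp
qed

fun kap :: "tr \<Rightarrow> tr" where
  "kap Lf = Lf"
| "kap (Nd l r) = Nd (kap r) (kap l)"

fun psi :: "tr \<Rightarrow> tr" where
  "psi Lf = Lf"
| "psi (Nd l r) = Nd (kap (psi l)) (psi r)"

fun RL :: "tr \<Rightarrow> nat" where
  "RL Lf = 0"
| "RL (Nd l r) = RL l + RL r + (if r = Lf then 1 else 0)"

lemma kap_kap[simp]: "kap (kap t) = t" by (induction t) auto
lemma size_kap[simp]: "size (kap t) = size t" by (induction t) auto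
lemma size_psi[simp]: "size (psi t) = size t" by (induction t) auto
lemma kap_Lf[simp]: "kap t = Lf \<longleftrightarrow> t = Lf" by (cases t) auto
lemma psi_Lf[simp]: "psi t = Lf \<longleftrightarrow> t = Lf" by (cases t) auto
lemma LL_kap: "LL (kap t) = RL t" by (induction t) auto
lemma LL_RL: "LL t + RL t + (if t = Lf then 1 else 0) = size t + 1"
  by (induction t) auto

definition Qo :: "int \<Rightarrow> bool \<Rightarrow> bool" where "Qo s x = (x \<and> odd s)"
definition Qc :: "int \<Rightarrow> bool \<Rightarrow> bool" where "Qc s x = ((\<not> x \<and> s = 1) \<or> (x \<and> s = 0))"

lemma Qo_simps[simp]: "Qo s True = odd s" "Qo s False = False" by (simp_all add: Qo_def)
lemma Qc_simps[simp]: "Qc s True = (s = 0)" "Qc s False = (s = 1)" by (simp_all add: Qc_def)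

lemma odd_sum: "cntT Qo h t + cntT Qo (h+1) t = size t"
proof (induction t arbitrary: h)
  case Lf then show ?case by simp
next
  case (Nd l r)
  have "cntT Qo (h+1) l + cntT Qo (h+1+1) l = size l" by (rule Nd.IH(1))
  moreover have "cntT Qo h r + cntT Qo (h+1) r = size r" by (rule Nd.IH(2))
  moreover have "(if odd (h+1) then 1 else 0) + (if odd (h+1+1) then 1 else (0::nat)) = 1" by auto
  ultimately show ?case by (cases "odd h") simp_all
qed

lemma cont_high: "h \<ge> 1 \<Longrightarrow> cntT Qc h t = 0"
  by (induction t arbitrary: h) auto

lemma cont_Nd: "cntT Qc 0 (Nd l r) = 1 + cntT Qc 0 r"
proof -
  have "cntT Qc 1 l = 0" by (rule cont_high) simp
  then show ?thesis by simp
qed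

lemma cont_psi: "cntT Qc 0 (psi t) = cntT Qc 0 t"
  by (induction t) (auto simp: cont_Nd cont_high)

lemma peaks_psi: "LL (psi t) = cntT Qo 0 t"
proof (induction t)
  case Lf then show ?case by simp
next
  case (Nd l r)
  have a: "LL (psi (Nd l r)) = (if l = Lf then 1 else 0) + RL (psi l) + LL (psi r)"
    by (simp add: LL_kap)
  have b: "cntT Qo 0 (Nd l r) = 1 + cntT Qo 1 l + cntT Qo 0 r"
    by simp
  show ?case using a b LL_RL[of "psi l"] odd_sum[of 0 l] Nd by simp
qed

lemma kap_inj: "kap a = kap b \<Longrightarrow> a = b" by (metis kap_kap)

lemma psi_inj: "psi a = psi b \<Longrightarrow> a = b"
proof (induction a arbitrary: b)
  case Lf then show ?case by (cases b) auto
next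
  case (Nd l r)
  then obtain c d where "b = Nd c d" by (cases b) auto
  with Nd show ?case by (auto dest: kap_inj)
qed

lemma finite_T: "finite {t::tr. size t = n}"
proof (rule finite_imageD[where f=enc])
  have "enc ` {t::tr. size t = n} \<subseteq> {xs. set xs \<subseteq> UNIV \<and> length xs = 2 * n}" by auto
  then show "finite (enc ` {t. size t = n})"
    by (rule finite_subset) (rule finite_lists_length_eq[of "UNIV :: bool set" "2*n"], simp)
  show "inj_on enc {t. size t = n}" using inj_enc by (simp add: inj_on_def inj_def)
qed

lemma dp_image: "{p \<in> dyck_paths n. P p} = enc ` {t. size t = n \<and> P (enc t)}"
  by (auto simp: dyck_paths_def semilength_def dyck_enc)

lemma contacts_enc: "contacts (enc t) = cntT Qc 0 t"
proof -
  have "contacts (enc t) = card {i. i < length (enc t) \<and> Qc (0 + step_height (enc t) i) (enc t ! i)}"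
    unfolding contacts_def Qc_def by (rule arg_cong[where f=card]) auto
  then show ?thesis by (simp only: card_cnt cnt_enc)
qed

lemma odd_enc: "odd_up_steps (enc t) = cntT Qo 0 t"
proof -
  have "odd_up_steps (enc t) = card {i. i < length (enc t) \<and> Qo (0 + step_height (enc t) i) (enc t ! i)}"
    unfolding odd_up_steps_def Qo_def by (rule arg_cong[where f=card]) auto
  then show ?thesis by (simp only: card_cnt cnt_enc)
qed

lemma peaks_enc: "peaks (enc t) = LL t"
  unfolding peaks_def card_pk pk_enc ..

theorem corollary1:
  fixes n m k :: nat
  shows "card {p \<in> dyck_paths n. contacts p = m \<and> odd_up_steps p = k}
       = card {p \<in> dyck_paths n. contacts p = m \<and> peaks p = k}"
proof -
  define A where "A = {t. size t = n \<and> cntT Qc 0 t = m \<and> cntT Qo 0 t = k}"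
  define B where "B = {t. size t = n \<and> cntT Qc 0 t = m \<and> LL t = k}"
  have i: "inj_on enc X" for X using inj_enc by (simp add: inj_on_def inj_def)
  have L: "card {p \<in> dyck_paths n. contacts p = m \<and> odd_up_steps p = k} = card A"
    unfolding dp_image A_def contacts_enc odd_enc by (rule card_image[OF i])
  have R: "card {p \<in> dyck_paths n. contacts p = m \<and> peaks p = k} = card B"
    unfolding dp_image B_def contacts_enc peaks_enc by (rule card_image[OF i])
  have T: "psi ` {t. size t = n} = {t. size t = n}"
  proof (rule endo_inj_surj[OF finite_T])
    show "psi ` {t. size t = n} \<subseteq> {t. size t = n}" by auto
    show "inj_on psi {t. size t = n}" by (rule inj_onI) (rule psi_inj)
  qed
  have "psi ` A = B"
  proof
    show "psi ` A \<subseteq> B"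
    proof
      fix t assume "t \<in> psi ` A"
      then obtain s where s: "s \<in> A" "t = psi s" by blast
      then show "t \<in> B" unfolding A_def B_def by (simp add: cont_psi peaks_psi)
    qed
    show "B \<subseteq> psi ` A"
    proof
      fix t assume t: "t \<in> B"
      then have "t \<in> psi ` {t. size t = n}" using T by (simp add: B_def)
      then obtain s where s: "size s = n" "t = psi s" by auto
      then have "s \<in> A" using t unfolding A_def B_def by (simp add: cont_psi peaks_psi)
      then show "t \<in> psi ` A" using s by blast
    qed
  qed
  moreover have "inj_on psi A" by (rule inj_onI) (rule psi_inj)
  ultimately have "card A = card B" by (metis card_image)
  then show ?thesis using L R by simp
qed

end
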